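(* Let $D_1\subset\mathbb{R}^2$ be the unit disk and let $u_\star:D_1\setminus\{0\}\to\mathbb{S}^1$ be $u_\star(p)=p/|p|$. Then $$\lim_{s\to1^-}(1-s)^2[u_\star]^2_{H^{\frac{1+s}{2}}(D_1)}=2\pi^2.$$
   Context: For open $\Omega\subset\mathbb{R}^2$, $[u]^2_{H^\alpha(\Omega)}:=\iint_{\Omega\times\Omega}\frac{|u(x)-u(y)|^2}{|x-y|^{2+2\alpha}}\,dx\,dy$. *)

theory Defs
  imports "HOL-Analysis.Analysis"
begin

text \<open>Squared Gagliardo seminorm of order alpha on an open set Omega of R^2
  (nonnegative integrand, so the Lebesgue integral is taken in ennreal;
  it may be infinite).\<close>
definition gagliardo_sq :: "real \<Rightarrow> (real^2) set \<Rightarrow> (real^2 \<Rightarrow> real^2) \<Rightarrow> ennreal" where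
  "gagliardo_sq \<alpha> \<Omega> u =
     (\<integral>\<^sup>+ z. indicator (\<Omega> \<times> \<Omega>) z *
        ennreal ((norm (u (fst z) - u (snd z)))\<^sup>2 / (norm (fst z - snd z)) powr (2 + 2 * \<alpha>))
      \<partial>(lborel \<Otimes>\<^sub>M lborel))"

text \<open>The vortex map p / |p| (its value at the null set {0} is irrelevant).\<close>
definition u_star :: "real^2 \<Rightarrow> real^2" where
  "u_star p = (1 / norm p) *\<^sub>R p"

end

theory Submission
  imports Defs
begin


lemma unit_ball_vol_2: "unit_ball_vol 2 = pi"
proof -
  have "Gamma (2::real) = 1" using Gamma_fact[of 1, where 'a=real] by simp
  then show ?thesis by (simp add: unit_ball_vol_def)
qed

lemma emeasure_ball2: "r \<ge> 0 \<Longrightarrow> emeasure lborel (ball (0::real^2) r) = ennreal (pi * r^2)"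
  using emeasure_ball[where c="0::real^2" and r=r] by (simp add: unit_ball_vol_2)

lemma distr_norm2_lessThan:
  "emeasure (distr (lborel :: (real^2) measure) borel norm) {..<a} = ennreal (if a \<le> 0 then 0 else pi * a^2)"
proof -
  have "emeasure (distr (lborel :: (real^2) measure) borel norm) {..<a} = emeasure lborel (norm -` {..<a} :: (real^2) set)"
    by (simp add: emeasure_distr)
  also have "norm -` {..<a} = ball (0::real^2) a" by auto
  finally show ?thesis using emeasure_ball2[of a] by (cases "a \<le> 0") (auto simp: ball_empty)
qed

lemma density_lessThan:
  "emeasure (density lborel (\<lambda>r. ennreal (2 * pi * r))) {..<a} = ennreal (if a \<le> 0 then 0 else pi * a^2)"
proof -
  have "emeasure (density lborel (\<lambda>r. ennreal (2 * pi * r))) {..<a} = (\<integral>\<^sup>+ r. ennreal (2 * pi * r) * indicator {..<a} r \<partial>lborel)"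
    by (simp add: emeasure_density)
  also have "\<dots> = (\<integral>\<^sup>+ r. ennreal (2 * pi * r) * indicator {0..a} r \<partial>lborel)"
    apply (rule nn_integral_cong_AE)
    using AE_lborel_singleton[of a]
    proof eventually_elim
      fix r :: real assume "r \<noteq> a"
      show "ennreal (2 * pi * r) * indicator {..<a} r = ennreal (2 * pi * r) * indicator {0..a} r"
      proof (cases "r < 0")
        case True then have "2 * pi * r \<le> 0" by (simp add: mult_nonneg_nonpos)
        then show ?thesis by (simp add: ennreal_neg)
      next
        case False then show ?thesis using \<open>r \<noteq> a\<close> by (auto simp: indicator_def)
      qed
    qed
  also have "\<dots> = ennreal (if a \<le> 0 then 0 else pi * a^2)"
  proof (cases "a \<le> 0")
    case True
    have "(\<integral>\<^sup>+ r. ennreal (2 * pi * r) * indicator {0..a} r \<partial>lborel) = (\<integral>\<^sup>+ (r::real). 0 \<partial>lborel)"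
      by (rule nn_integral_cong) (use True in \<open>auto simp: indicator_def\<close>)
    then show ?thesis using True by simp
  next
    case False
    have "(\<integral>\<^sup>+ r. ennreal (2 * pi * r) * indicator {0..a} r \<partial>lborel) = pi * a^2 - pi * 0^2"
      using False by (intro nn_integral_FTC_Icc) (auto intro!: derivative_eq_intros)
    then show ?thesis using False by simp
  qed
  finally show ?thesis .
qed

lemma distr_norm2:
  "distr (lborel :: (real^2) measure) borel norm = density lborel (\<lambda>r. ennreal (2 * pi * r))"
  (is "?M = ?N")
proof (rule measure_eqI_generator_eq_countable[where E="range lessThan" and A="range (\<lambda>n::nat. {..<real n})"])
  show "Int_stable (range lessThan :: real set set)"
  proof (rule Int_stableI)
    fix a b :: "real set" assume "a \<in> range lessThan" "b \<in> range lessThan"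
    then obtain x y where "a = {..<x}" "b = {..<y}" by auto
    then have "a \<inter> b = {..<min x y}" by auto
    then show "a \<inter> b \<in> range lessThan" by auto
  qed
  show "range lessThan \<subseteq> Pow (UNIV::real set)" by auto
  show "sets ?M = sigma_sets UNIV (range lessThan)" by (simp add: borel_Iio)
  show "sets ?N = sigma_sets UNIV (range lessThan)" by (simp add: borel_Iio)
  show "countable (range (\<lambda>n::nat. {..<real n}))" by simp
  show "range (\<lambda>n::nat. {..<real n}) \<subseteq> range lessThan" by auto
  show "\<Union> (range (\<lambda>n::nat. {..<real n})) = UNIV"
    by (auto intro: reals_Archimedean2)
  show "emeasure ?M X = emeasure ?N X" if "X \<in> range lessThan" for X
    using that distr_norm2_lessThan density_lessThan by auto
  show "emeasure ?M X \<noteq> \<infinity>" if "X \<in> range (\<lambda>n::nat. {..<real n})" for X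
    using that distr_norm2_lessThan by auto
qed

lemma radial2:
  assumes [measurable]: "f \<in> borel_measurable borel"
  shows "(\<integral>\<^sup>+ x. f (norm (x::real^2)) \<partial>lborel) = (\<integral>\<^sup>+ r. ennreal (2 * pi * r) * f r \<partial>lborel)"
proof -
  have "(\<integral>\<^sup>+ x. f (norm (x::real^2)) \<partial>lborel) = (\<integral>\<^sup>+ r. f r \<partial>distr (lborel :: (real^2) measure) borel norm)"
    by (simp add: nn_integral_distr)
  also have "\<dots> = (\<integral>\<^sup>+ r. ennreal (2 * pi * r) * f r \<partial>lborel)"
    by (simp add: distr_norm2 nn_integral_density)
  finally show ?thesis .
qed


lemma int_small:
  fixes s \<rho> :: real
  assumes s: "s < 1" and \<rho>: "\<rho> > 0"
  shows "(\<integral>\<^sup>+ x. indicator (ball (0::real^2) \<rho>) x * ennreal (norm x powr (-1-s)) \<partial>lborel)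
       = ennreal (2 * pi * \<rho> powr (1-s) / (1-s))"
proof -
  have "(\<integral>\<^sup>+ x. indicator (ball (0::real^2) \<rho>) x * ennreal (norm x powr (-1-s)) \<partial>lborel)
      = (\<integral>\<^sup>+ x. (\<lambda>r. indicator {..<\<rho>} r * ennreal (r powr (-1-s))) (norm (x::real^2)) \<partial>lborel)"
    by (rule nn_integral_cong) (simp add: indicator_def)
  also have "\<dots> = (\<integral>\<^sup>+ r. ennreal (2 * pi * r) * (indicator {..<\<rho>} r * ennreal (r powr (-1-s))) \<partial>lborel)"
    by (rule radial2) measurable
  also have "\<dots> = (\<integral>\<^sup>+ r. ennreal (2 * pi * r powr (-s) * indicator {0..\<rho>} r) \<partial>lborel)"
  proof (rule nn_integral_cong_AE)
    show "AE r in lborel. ennreal (2 * pi * r) * (indicator {..<\<rho>} r * ennreal (r powr (-1-s)))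
              = ennreal (2 * pi * r powr (-s) * indicator {0..\<rho>} r)"
      using AE_lborel_singleton[of \<rho>]
    proof eventually_elim
      fix r :: real assume "r \<noteq> \<rho>"
      consider "r < 0" | "r = 0" | "0 < r" "r < \<rho>" | "r > \<rho>" using \<open>r \<noteq> \<rho>\<close> by linarith
      then show "ennreal (2 * pi * r) * (indicator {..<\<rho>} r * ennreal (r powr (-1-s)))
              = ennreal (2 * pi * r powr (-s) * indicator {0..\<rho>} r)"
      proof cases
        case 1
        then have "2 * pi * r \<le> 0" by (simp add: mult_nonneg_nonpos)
        then show ?thesis using 1 by (simp add: ennreal_neg indicator_def)
      next
        case 2 then show ?thesis using \<rho> by (simp add: indicator_def)
      next
        case 3
        have "r * r powr (-1-s) = r powr (-s)"
          using 3 by (simp add: powr_add[symmetric] powr_mult_base)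
        then have "2 * pi * r * r powr (-1-s) = 2 * pi * r powr (-s)" by (simp add: mult.assoc)
        then show ?thesis using 3 by (simp add: indicator_def ennreal_mult'[symmetric])
      next
        case 4 then show ?thesis by (simp add: indicator_def)
      qed
    qed
  qed
  also have "\<dots> = ennreal (2 * pi * \<rho> powr (1-s) / (1-s))"
  proof (rule nn_integral_has_integral_lborel)
    show "(\<lambda>r. 2 * pi * r powr (-s) * indicator {0..\<rho>} r) \<in> borel_measurable borel" by measurable
    show "0 \<le> 2 * pi * r powr (-s) * indicator {0..\<rho>} r" for r by (simp add: indicator_def)
    have "((\<lambda>r. r powr (-s)) has_integral (\<rho> powr (-s+1) / (-s+1))) {0..\<rho>}"
      using has_integral_powr_from_0[of "-s" \<rho>] s \<rho> by simp
    then have "((\<lambda>r. 2 * pi * r powr (-s)) has_integral (2 * pi * (\<rho> powr (-s+1) / (-s+1)))) {0..\<rho>}"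
      by (intro has_integral_mult_right)
    then have "((\<lambda>r. if r \<in> {0..\<rho>} then 2 * pi * r powr (-s) else 0) has_integral (2 * pi * \<rho> powr (1-s) / (1-s))) UNIV"
      by (subst has_integral_restrict_UNIV) (simp add: algebra_simps)
    then show "((\<lambda>r. 2 * pi * r powr (-s) * indicator {0..\<rho>} r) has_integral (2 * pi * \<rho> powr (1-s) / (1-s))) UNIV"
      by (rule has_integral_eq[rotated]) (simp add: indicator_def)
  qed
  finally show ?thesis .
qed

lemma int_large:
  fixes s c :: real
  assumes s: "s > -1" and c: "c > 0"
  shows "(\<integral>\<^sup>+ x. indicator {x. c \<le> norm x} (x::real^2) * ennreal (norm x powr (-3-s)) \<partial>lborel)
       = ennreal (2 * pi * c powr (-1-s) / (1+s))"
proof -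
  have "(\<integral>\<^sup>+ x. indicator {x. c \<le> norm x} (x::real^2) * ennreal (norm x powr (-3-s)) \<partial>lborel)
      = (\<integral>\<^sup>+ x. (\<lambda>r. indicator {c..} r * ennreal (r powr (-3-s))) (norm (x::real^2)) \<partial>lborel)"
    by (rule nn_integral_cong) (simp add: indicator_def)
  also have "\<dots> = (\<integral>\<^sup>+ r. ennreal (2 * pi * r) * (indicator {c..} r * ennreal (r powr (-3-s))) \<partial>lborel)"
    by (rule radial2) measurable
  also have "\<dots> = (\<integral>\<^sup>+ r. ennreal (2 * pi * r powr (-2-s)) * indicator {c..} r \<partial>lborel)"
  proof (rule nn_integral_cong)
    fix r :: real
    show "ennreal (2 * pi * r) * (indicator {c..} r * ennreal (r powr (-3-s)))
              = ennreal (2 * pi * r powr (-2-s)) * indicator {c..} r"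
    proof (cases "c \<le> r")
      case True
      then have "r > 0" using c by linarith
      have "r * r powr (-3-s) = r powr (-2-s)"
        using \<open>r > 0\<close> by (simp add: powr_add[symmetric] powr_mult_base)
      then have "2 * pi * r * r powr (-3-s) = 2 * pi * r powr (-2-s)" by (simp add: mult.assoc)
      then show ?thesis using True \<open>r > 0\<close> by (simp add: indicator_def ennreal_mult'[symmetric])
    qed (simp add: indicator_def)
  qed
  also have "\<dots> = 0 - (- 2 * pi * c powr (-1-s) / (1+s))"
  proof (rule nn_integral_FTC_atLeast)
    show "(\<lambda>r. 2 * pi * r powr (-2-s)) \<in> borel_measurable borel" by measurable
    show "0 \<le> 2 * pi * r powr (-2-s)" for r by simp
    show "((\<lambda>r. - 2 * pi * r powr (-1-s) / (1+s)) \<longlongrightarrow> 0) at_top"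
    proof -
      have "((\<lambda>r::real. r powr (-1-s)) \<longlongrightarrow> 0) at_top"
        using s by (intro tendsto_neg_powr filterlim_ident) auto
      then have "((\<lambda>r. - 2 * pi * r powr (-1-s) / (1+s)) \<longlongrightarrow> - 2 * pi * 0 / (1+s)) at_top"
        using s by (intro tendsto_intros) auto
      then show ?thesis by simp
    qed
    show "((\<lambda>r. - 2 * pi * r powr (-1-s) / (1+s)) has_real_derivative 2 * pi * r powr (-2-s)) (at r)"
      if "c \<le> r" for r
    proof -
      have "r > 0" using c that by linarith
      have "((\<lambda>r. r powr (-1-s)) has_real_derivative (-1-s) * r powr (-1-s-1)) (at r)"
        using \<open>r > 0\<close> by (rule has_real_derivative_powr)
      then have "((\<lambda>r. (- 2 * pi / (1+s)) * r powr (-1-s)) has_real_derivative (- 2 * pi / (1+s)) * ((-1-s) * r powr (-1-s-1))) (at r)"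
        by (rule DERIV_cmult)
      moreover have "(- 2 * pi / (1+s)) * ((-1-s) * r powr (-1-s-1)) = 2 * pi * r powr (-2-s)"
      proof -
        have e: "r powr (-1-s-1) = r powr (-2-s)" by (rule arg_cong[where f="\<lambda>t. r powr t"]) simp
        have "1 + s \<noteq> 0" using s by simp
        then show ?thesis unfolding e by (simp add: field_simps)
      qed
      moreover have "(\<lambda>r. (- 2 * pi / (1+s)) * r powr (-1-s)) = (\<lambda>r. - 2 * pi * r powr (-1-s) / (1+s))"
        by auto
      ultimately show ?thesis by simp
    qed
  qed
  also have "\<dots> = ennreal (2 * pi * c powr (-1-s) / (1+s))" by simp
  finally show ?thesis .
qed


definition rotT :: "real^2 \<Rightarrow> real^2" where
  "rotT h = vector [-(h$2), h$1]"

lemma rotT_nth [simp]: "rotT h $ 1 = -(h$2)" "rotT h $ 2 = h$1"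
  by (simp_all add: rotT_def)

lemma Basis_real2: "(Basis :: (real^2) set) = {axis 1 1, axis 2 1}"
  by (auto simp: Basis_vec_def UNIV_2)

lemma prod_Basis_real2: "(\<Prod>b\<in>(Basis :: (real^2) set). f b) = f (axis 1 1) * f (axis 2 1)"
  by (simp add: Basis_real2 axis_eq_axis)

lemma linear_rotT: "linear rotT"
  by (rule linearI) (auto simp: vec_eq_iff forall_2)

lemma rotT_measurable [measurable]: "rotT \<in> borel_measurable borel"
  by (intro borel_measurable_continuous_onI linear_continuous_on linear_rotT[unfolded linear_conv_bounded_linear])

lemma distr_rotT: "distr lborel borel rotT = lborel"
proof (rule lborel_eqI[symmetric])
  show "sets (distr lborel borel rotT) = sets borel" by simp
  fix l u :: "real^2"
  assume le: "\<And>b. b \<in> Basis \<Longrightarrow> l \<bullet> b \<le> u \<bullet> b"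
  define l' :: "real^2" where "l' = vector [l$2, -(u$1)]"
  define u' :: "real^2" where "u' = vector [u$2, -(l$1)]"
  have pre: "rotT -` box l u = box l' u'"
    by (auto simp: mem_box_cart forall_2 l'_def u'_def)
  have "l$1 \<le> u$1" "l$2 \<le> u$2" using le[of "axis 1 1"] le[of "axis 2 1"]
    by (auto simp: Basis_real2 inner_axis)
  then have le': "\<forall>b\<in>Basis. l' \<bullet> b \<le> u' \<bullet> b"
    by (auto simp: Basis_real2 inner_axis l'_def u'_def)
  have "emeasure (distr lborel borel rotT) (box l u) = emeasure lborel (box l' u')"
    by (simp add: emeasure_distr pre)
  also have "\<dots> = (\<Prod>b\<in>Basis. (u' - l') \<bullet> b)"
    using le' by (simp add: emeasure_lborel_box_eq)
  also have "\<dots> = (\<Prod>b\<in>Basis. (u - l) \<bullet> b)"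
    by (simp add: prod_Basis_real2 inner_axis l'_def u'_def mult.commute)
  finally show "emeasure (distr lborel borel rotT) (box l u) = (\<Prod>b\<in>Basis. (u - l) \<bullet> b)" .
qed

lemma nn_integral_rotT:
  assumes [measurable]: "f \<in> borel_measurable borel"
  shows "(\<integral>\<^sup>+ h. f (rotT h) \<partial>lborel) = (\<integral>\<^sup>+ h. f h \<partial>lborel)"
proof -
  have "(\<integral>\<^sup>+ h. f (rotT h) \<partial>lborel) = (\<integral>\<^sup>+ h. f h \<partial>distr lborel borel rotT)"
    by (simp add: nn_integral_distr)
  then show ?thesis by (simp add: distr_rotT)
qed

lemma norm_rotT [simp]: "norm (rotT h) = norm h"
  by (simp add: norm_eq_sqrt_inner inner_vec_def sum_2 algebra_simps)

lemma inner_rotT_sq: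
  assumes "norm e = 1"
  shows "(rotT h \<bullet> e)^2 + (h \<bullet> e)^2 = (norm h)^2"
proof -
  have ne: "(norm e)^2 = e$1^2 + e$2^2" and nh: "(norm h)^2 = h$1^2 + h$2^2"
    by (simp_all only: power2_norm_eq_inner) (simp_all add: inner_vec_def sum_2 power2_eq_square)
  have "(rotT h \<bullet> e)^2 + (h \<bullet> e)^2 = (h$1^2 + h$2^2) * (e$1^2 + e$2^2)"
    unfolding inner_vec_def sum_2 rotT_nth inner_real_def by algebra
  also have "\<dots> = (norm h)^2" using ne nh assms by simp
  finally show ?thesis .
qed


lemma norm2_meas [measurable]: "(norm :: real^2 \<Rightarrow> real) \<in> borel_measurable borel"
  by (intro borel_measurable_continuous_onI continuous_intros)

lemma ball2_meas [measurable]: "ball (c::real^2) r \<in> sets borel"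
  by simp

lemma int_sym:
  fixes s \<rho> :: real and e :: "real^2"
  assumes s: "s < 1" and \<rho>: "\<rho> > 0" and e: "norm e = 1"
  shows "(\<integral>\<^sup>+ h. indicator (ball 0 \<rho>) h * ennreal (((norm h)^2 - (h \<bullet> e)^2) * norm h powr (-3-s)) \<partial>lborel)
       = ennreal (pi * \<rho> powr (1-s) / (1-s))"
proof -
  define g where "g h = indicator (ball 0 \<rho>) h * norm h powr (-3-s)" for h :: "real^2"
  have g_nn: "g h \<ge> 0" for h by (simp add: g_def)
  have g_rot: "g (rotT h) = g h" for h by (simp add: g_def indicator_def)
  have [measurable]: "g \<in> borel_measurable borel" unfolding g_def by measurable
  define A where "A = (\<integral>\<^sup>+ h. ennreal (g h * (h \<bullet> e)^2) \<partial>lborel)"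
  define B where "B = (\<integral>\<^sup>+ h. ennreal (g h * (rotT h \<bullet> e)^2) \<partial>lborel)"
  have "B = (\<integral>\<^sup>+ h. (\<lambda>h. ennreal (g h * (h \<bullet> e)^2)) (rotT h) \<partial>lborel)"
    unfolding B_def by (simp add: g_rot)
  also have "\<dots> = A" unfolding A_def by (rule nn_integral_rotT) measurable
  finally have BA: "B = A" .
  have "A + B = (\<integral>\<^sup>+ h. ennreal (g h * (h \<bullet> e)^2) + ennreal (g h * (rotT h \<bullet> e)^2) \<partial>lborel)"
    unfolding A_def B_def by (rule nn_integral_add[symmetric]) auto
  also have "\<dots> = (\<integral>\<^sup>+ h. indicator (ball (0::real^2) \<rho>) h * ennreal (norm h powr (-1-s)) \<partial>lborel)"
  proof (rule nn_integral_cong)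
    fix h :: "real^2"
    have "ennreal (g h * (h \<bullet> e)^2) + ennreal (g h * (rotT h \<bullet> e)^2) = ennreal (g h * ((rotT h \<bullet> e)^2 + (h \<bullet> e)^2))"
      using g_nn[of h] by (simp add: ennreal_plus[symmetric] algebra_simps del: ennreal_plus)
    also have "\<dots> = ennreal (g h * (norm h)^2)" using inner_rotT_sq[OF e] by simp
    also have "\<dots> = indicator (ball 0 \<rho>) h * ennreal (norm h powr (-1-s))"
    proof (cases "h = 0")
      case False
      then have n: "norm h > 0" by simp
      have p2: "norm h powr 2 = (norm h)^2" using n by (simp add: powr_numeral)
      have "norm h powr (-3-s) * norm h powr 2 = norm h powr (-3-s+2)" by (rule powr_add[symmetric])
      also have "-3-s+2 = -1-s" by simp
      finally have "norm h powr (-3-s) * (norm h)^2 = norm h powr (-1-s)" by (simp only: p2)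
      then show ?thesis by (simp add: g_def indicator_def)
    qed (simp add: g_def indicator_def)
    finally show "ennreal (g h * (h \<bullet> e)^2) + ennreal (g h * (rotT h \<bullet> e)^2) = indicator (ball 0 \<rho>) h * ennreal (norm h powr (-1-s))" .
  qed
  also have "\<dots> = ennreal (2 * pi * \<rho> powr (1-s) / (1-s))" by (rule int_small[OF s \<rho>])
  finally have AB: "A + B = ennreal (2 * pi * \<rho> powr (1-s) / (1-s))" .
  have lhs: "(\<integral>\<^sup>+ h. indicator (ball 0 \<rho>) h * ennreal (((norm h)^2 - (h \<bullet> e)^2) * norm h powr (-3-s)) \<partial>lborel) = B"
    unfolding B_def
  proof (rule nn_integral_cong)
    fix h :: "real^2"
    have "(norm h)^2 - (h \<bullet> e)^2 = (rotT h \<bullet> e)^2" using inner_rotT_sq[OF e, of h] by simp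
    then show "indicator (ball 0 \<rho>) h * ennreal (((norm h)^2 - (h \<bullet> e)^2) * norm h powr (-3-s)) = ennreal (g h * (rotT h \<bullet> e)^2)"
      by (simp add: g_def indicator_def mult.commute)
  qed
  have "B + B = ennreal (2 * pi * \<rho> powr (1-s) / (1-s))" using AB BA by simp
  moreover have "B \<noteq> \<infinity>" using calculation by auto
  then obtain b where b: "B = ennreal b" "b \<ge> 0" by (cases B) auto
  ultimately have "ennreal (b + b) = ennreal (2 * pi * \<rho> powr (1-s) / (1-s))"
    by (simp add: ennreal_plus[symmetric] del: ennreal_plus)
  then have "b + b = 2 * pi * \<rho> powr (1-s) / (1-s)"
    using b s by (subst (asm) ennreal_inj) auto
  then have "b = pi * \<rho> powr (1-s) / (1-s)" by simp
  then show ?thesis using lhs b by simp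
qed


lemma norm_u_star_le: "norm (u_star p) \<le> 1"
  by (cases "p = 0") (auto simp: u_star_def)

lemma norm_u_star [simp]: "p \<noteq> 0 \<Longrightarrow> norm (u_star p) = 1"
  by (auto simp: u_star_def)

lemma u_star_diff_le4: "(norm (u_star x - u_star y))^2 \<le> 4"
proof -
  have "norm (u_star x - u_star y) \<le> 2"
    using norm_triangle_ineq4[of "u_star x" "u_star y"] norm_u_star_le[of x] norm_u_star_le[of y] by linarith
  then have "(norm (u_star x - u_star y))^2 \<le> 2^2" by (intro power_mono) auto
  then show ?thesis by simp
qed

lemma u_star_identity:
  fixes x h :: "real^2"
  assumes x: "x \<noteq> 0" and y: "x + h \<noteq> 0"
  shows "(norm (u_star x - u_star (x+h)))^2 * (norm (x+h) * (norm (x+h) + norm x + h \<bullet> u_star x))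
         = 2 * ((norm h)^2 - (h \<bullet> u_star x)^2)"
proof -
  define y where "y = x + h"
  define X where "X = norm x"
  define Y where "Y = norm y"
  define p where "p = x \<bullet> y"
  have X: "X > 0" using x by (simp add: X_def)
  have Y: "Y > 0" using y by (simp add: Y_def y_def)
  have XX: "x \<bullet> x = X^2" by (simp add: X_def power2_norm_eq_inner)
  have YY: "y \<bullet> y = Y^2" by (simp add: Y_def power2_norm_eq_inner)
  have hy: "h = y - x" by (simp add: y_def)
  have n1: "(norm (u_star x - u_star y))^2 = 2 - 2 * p / (X * Y)"
  proof -
    have "(norm (u_star x - u_star y))^2 = (u_star x - u_star y) \<bullet> (u_star x - u_star y)"
      by (simp add: power2_norm_eq_inner)
    also have "\<dots> = (1/X) * (1/X) * (x \<bullet> x) - 2 * ((1/X) * (1/Y) * p) + (1/Y) * (1/Y) * (y \<bullet> y)"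
      unfolding u_star_def X_def[symmetric] Y_def[symmetric] p_def
      by (simp only: inner_diff_left inner_diff_right inner_scaleR_left inner_scaleR_right inner_commute[of y x])
        (simp add: algebra_simps)
    also have "\<dots> = (x \<bullet> x) / X^2 - 2 * p / (X * Y) + (y \<bullet> y) / Y^2"
      by (simp add: power2_eq_square)
    also have "\<dots> = 2 - 2 * p / (X * Y)" using XX YY X Y by simp
    finally show ?thesis .
  qed
  have hx': "h \<bullet> x = p - X^2"
    using XX by (simp add: hy inner_diff_left inner_diff_right p_def inner_commute)
  have ha: "h \<bullet> u_star x = (p - X^2) / X"
    using hx' by (simp add: u_star_def X_def[symmetric])
  have hh: "(norm h)^2 = Y^2 - 2 * p + X^2"
    using XX YY by (simp add: hy power2_norm_eq_inner inner_diff_left inner_diff_right p_def inner_commute)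
  show ?thesis
  proof -
    have e1: "2 - 2*p/(X*Y) = 2*(X*Y - p)/(X*Y)" using X Y by (simp add: field_simps)
    have e2: "Y + X + (p - X^2)/X = (X*Y + p)/X" using X by (simp add: field_simps power2_eq_square)
    have e3: "(Y^2 - 2*p + X^2) - ((p - X^2)/X)^2 = (X^2*Y^2 - p^2)/X^2"
    proof -
      have "((p - X^2)/X)^2 = (p - X^2)^2 / X^2" by (simp add: power_divide)
      moreover have "(Y^2 - 2*p + X^2) = (Y^2 - 2*p + X^2) * X^2 / X^2" using X by simp
      ultimately have "(Y^2 - 2*p + X^2) - ((p - X^2)/X)^2 = ((Y^2 - 2*p + X^2) * X^2 - (p - X^2)^2) / X^2"
        by (metis diff_divide_distrib)
      also have "(Y^2 - 2*p + X^2) * X^2 - (p - X^2)^2 = X^2*Y^2 - p^2" by algebra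
      finally show ?thesis .
    qed
    have "2*(X*Y - p)/(X*Y) * (Y * ((X*Y + p)/X)) = 2*((X^2*Y^2 - p^2)/X^2)"
    proof -
      have "2*(X*Y - p)/(X*Y) * (Y * ((X*Y + p)/X)) = (2*(X*Y - p)*(X*Y + p)) * Y / (X*Y*X)"
        by (simp add: field_simps)
      also have "\<dots> = (2*(X*Y - p)*(X*Y + p)) / (X*X)" using Y by simp
      also have "(2*(X*Y - p)*(X*Y + p)) = 2*(X^2*Y^2 - p^2)" by algebra
      finally show ?thesis by (simp add: power2_eq_square)
    qed
    then show ?thesis unfolding y_def[symmetric] X_def[symmetric] Y_def[symmetric] n1 ha hh e1 e2 e3 .
  qed
qed

lemma u_star_bounds:
  fixes x h :: "real^2" and \<epsilon> :: real
  assumes x: "x \<noteq> 0" and e0: "0 < \<epsilon>" and e1: "\<epsilon> < 1" and hx: "norm h \<le> \<epsilon> * norm x"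
  shows "(norm h)^2 - (h \<bullet> u_star x)^2 \<le> (norm (u_star x - u_star (x+h)))^2 * ((1+\<epsilon>)^2 * (norm x)^2)"
    and "(norm (u_star x - u_star (x+h)))^2 * ((1-\<epsilon>)^2 * (norm x)^2) \<le> (norm h)^2 - (h \<bullet> u_star x)^2"
proof -
  define X where "X = norm x"
  define Y where "Y = norm (x+h)"
  define a where "a = h \<bullet> u_star x"
  define N where "N = (norm (u_star x - u_star (x+h)))^2"
  define Q where "Q = (norm h)^2 - (h \<bullet> u_star x)^2"
  have X: "X > 0" using x by (simp add: X_def)
  have hX: "norm h \<le> \<epsilon> * X" using hx by (simp add: X_def)
  have "norm x \<le> norm (x+h) + norm h" using norm_triangle_ineq[of "x+h" "-h"] by simp
  then have Ylo: "Y \<ge> (1-\<epsilon>) * X"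
    using hX by (simp add: Y_def X_def algebra_simps)
  have Yhi: "Y \<le> (1+\<epsilon>) * X"
    using norm_triangle_ineq[of x h] hX by (simp add: Y_def X_def algebra_simps)
  have a_abs: "\<bar>a\<bar> \<le> norm h"
    using Cauchy_Schwarz_ineq2[of h "u_star x"] x by (simp add: a_def)
  have y0: "x + h \<noteq> 0"
  proof
    assume "x + h = 0"
    then have "Y = 0" by (simp add: Y_def)
    moreover have "(1-\<epsilon>) * X > 0" using X e1 by simp
    ultimately show False using Ylo by linarith
  qed
  have id: "N * (Y * (Y + X + a)) = 2 * Q"
    using u_star_identity[OF x y0] by (simp add: N_def Q_def Y_def X_def a_def)
  have l1: "(1-\<epsilon>)*X = X - \<epsilon>*X" "2*(1-\<epsilon>)*X = 2*X - 2*(\<epsilon>*X)" "(1+\<epsilon>)*X = X + \<epsilon>*X" "2*(1+\<epsilon>)*X = 2*X+2*(\<epsilon>*X)"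
    by (simp add: algebra_simps)+
  have a_lo: "- norm h \<le> a" and a_hi: "a \<le> norm h" using a_abs by linarith+
  have S_lo: "Y + X + a \<ge> 2 * (1-\<epsilon>) * X" using Ylo a_lo hX by (simp add: algebra_simps)
  have S_hi: "Y + X + a \<le> 2 * (1+\<epsilon>) * X" using Yhi a_hi hX by (simp add: algebra_simps)
  have pos1: "(1-\<epsilon>) * X \<ge> 0" using X e1 by simp
  have D_lo: "Y * (Y + X + a) \<ge> ((1-\<epsilon>) * X) * (2 * (1-\<epsilon>) * X)"
    by (rule mult_mono[OF Ylo S_lo]) (use pos1 Ylo X e1 in \<open>auto simp: Y_def\<close>)
  have D_hi: "Y * (Y + X + a) \<le> ((1+\<epsilon>) * X) * (2 * (1+\<epsilon>) * X)"
  proof (rule mult_mono[OF Yhi S_hi])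
    show "0 \<le> (1 + \<epsilon>) * X" using X e0 by simp
    have "0 \<le> 2 * ((1-\<epsilon>) * X)" using pos1 by simp
    then show "0 \<le> Y + X + a" using S_lo by (metis mult.assoc order_trans)
  qed
  have N0: "N \<ge> 0" by (simp add: N_def)
  have "N * (Y * (Y + X + a)) \<le> N * (((1+\<epsilon>) * X) * (2 * (1+\<epsilon>) * X))"
    by (rule mult_left_mono[OF D_hi N0])
  then show "(norm h)^2 - (h \<bullet> u_star x)^2 \<le> (norm (u_star x - u_star (x+h)))^2 * ((1+\<epsilon>)^2 * (norm x)^2)"
    unfolding N_def[symmetric] Q_def[symmetric] X_def[symmetric] using id
    by (simp add: power2_eq_square algebra_simps)
  have "N * (((1-\<epsilon>) * X) * (2 * (1-\<epsilon>) * X)) \<le> N * (Y * (Y + X + a))"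
    by (rule mult_left_mono[OF D_lo N0])
  then show "(norm (u_star x - u_star (x+h)))^2 * ((1-\<epsilon>)^2 * (norm x)^2) \<le> (norm h)^2 - (h \<bullet> u_star x)^2"
    unfolding N_def[symmetric] Q_def[symmetric] X_def[symmetric] using id
    by (simp add: power2_eq_square algebra_simps)
qed


lemma u_star_meas [measurable]: "u_star \<in> borel_measurable borel"
  unfolding u_star_def by measurable

definition K :: "real \<Rightarrow> real^2 \<Rightarrow> real^2 \<Rightarrow> ennreal" where
  "K s x y = ennreal ((norm (u_star x - u_star y))^2 / norm (x - y) powr (3 + s))"

lemma gag_fubini:
  "gagliardo_sq ((1+s)/2) (ball 0 1) u_star =
     (\<integral>\<^sup>+ x. indicator (ball 0 1) x * (\<integral>\<^sup>+ y. indicator (ball 0 1) y * K s x y \<partial>lborel) \<partial>lborel)"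
proof -
  have e: "2 + 2 * ((1 + s) / 2) = 3 + s" by simp
  have m: "(\<lambda>z::(real^2)\<times>(real^2). indicator (ball 0 1 \<times> ball 0 1) z *
        ennreal ((norm (u_star (fst z) - u_star (snd z)))\<^sup>2 / (norm (fst z - snd z)) powr (3 + s)))
      \<in> borel_measurable (lborel \<Otimes>\<^sub>M lborel)"
    by measurable
  have "gagliardo_sq ((1+s)/2) (ball 0 1) u_star = (\<integral>\<^sup>+ z. indicator (ball 0 1 \<times> ball 0 1) z *
        ennreal ((norm (u_star (fst z) - u_star (snd z)))\<^sup>2 / (norm (fst z - snd z)) powr (3 + s)) \<partial>(lborel \<Otimes>\<^sub>M lborel))"
    unfolding gagliardo_sq_def e ..
  also have "\<dots> = (\<integral>\<^sup>+ x. \<integral>\<^sup>+ y. indicator (ball 0 1 \<times> ball 0 1) (x, y) *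
        ennreal ((norm (u_star x - u_star y))\<^sup>2 / (norm (x - y)) powr (3 + s)) \<partial>lborel \<partial>lborel)"
    using lborel.nn_integral_fst[OF m] by simp
  also have "\<dots> = (\<integral>\<^sup>+ x. indicator (ball 0 1) x * (\<integral>\<^sup>+ y. indicator (ball 0 1) y * K s x y \<partial>lborel) \<partial>lborel)"
  proof (rule nn_integral_cong)
    fix x :: "real^2"
    show "(\<integral>\<^sup>+ y. indicator (ball 0 1 \<times> ball 0 1) (x, y) *
        ennreal ((norm (u_star x - u_star y))\<^sup>2 / (norm (x - y)) powr (3 + s)) \<partial>lborel) =
        indicator (ball 0 1) x * (\<integral>\<^sup>+ y. indicator (ball 0 1) y * K s x y \<partial>lborel)"
      by (subst nn_integral_cmult[symmetric]) (auto simp: K_def indicator_def intro!: nn_integral_cong)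
  qed
  finally show ?thesis .
qed

lemma transl2:
  fixes f :: "real^2 \<Rightarrow> ennreal"
  assumes [measurable]: "f \<in> borel_measurable borel"
  shows "(\<integral>\<^sup>+ y. f y \<partial>lborel) = (\<integral>\<^sup>+ h. f (x + h) \<partial>lborel)"
proof -
  have "(\<integral>\<^sup>+ h. f (x + h) \<partial>lborel) = (\<integral>\<^sup>+ y. f y \<partial>distr lborel borel ((+) x))"
    by (simp add: nn_integral_distr)
  then show ?thesis by (simp add: lborel_distr_plus)
qed

definition Cup :: "real \<Rightarrow> real \<Rightarrow> real" where
  "Cup s \<epsilon> = pi * \<epsilon> powr (1-s) / ((1-\<epsilon>)^2 * (1-s)) + 8 * pi * \<epsilon> powr (-1-s) / (1+s)"

definition Clo :: "real \<Rightarrow> real \<Rightarrow> real" where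
  "Clo s \<epsilon> = pi * \<epsilon> powr (1-s) / ((1+\<epsilon>)^2 * (1-s))"

lemma powr_X_aux:
  fixes X :: real assumes X: "X > 0"
  shows "X powr (1-s) / X^2 = X powr (-1-s)"
proof -
  have "X powr (-1-s) * X powr 2 = X powr (-1-s+2)" by (rule powr_add[symmetric])
  also have "-1-s+2 = 1-s" by simp
  finally have "X powr (1-s) = X powr (-1-s) * X^2" using X by simp
  then show ?thesis using X by simp
qed

lemma arith_up:
  fixes X \<epsilon> s :: real assumes X: "X > 0" and e: "\<epsilon> > 0"
  shows "1/((1-\<epsilon>)^2*X^2) * (pi*(\<epsilon>*X) powr (1-s)/(1-s)) + 4*(2*pi*(\<epsilon>*X) powr (-1-s)/(1+s))
        = Cup s \<epsilon> * X powr (-1-s)"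
proof -
  have a: "(\<epsilon>*X) powr (1-s) = \<epsilon> powr (1-s) * X powr (1-s)" "(\<epsilon>*X) powr (-1-s) = \<epsilon> powr (-1-s) * X powr (-1-s)"
    using X e by (simp_all add: powr_mult)
  have "1/((1-\<epsilon>)^2*X^2) * (pi*(\<epsilon>*X) powr (1-s)/(1-s)) = pi * \<epsilon> powr (1-s) / ((1-\<epsilon>)^2 * (1-s)) * (X powr (1-s) / X^2)"
    unfolding a by (simp add: field_simps)
  also have "\<dots> = pi * \<epsilon> powr (1-s) / ((1-\<epsilon>)^2 * (1-s)) * X powr (-1-s)" using powr_X_aux[OF X] by simp
  finally show ?thesis unfolding Cup_def a(2) by (simp add: algebra_simps)
qed

lemma arith_lo:
  fixes X \<epsilon> s :: real assumes X: "X > 0" and e: "\<epsilon> > 0"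
  shows "1/((1+\<epsilon>)^2*X^2) * (pi*(\<epsilon>*X) powr (1-s)/(1-s)) = Clo s \<epsilon> * X powr (-1-s)"
proof -
  have a: "(\<epsilon>*X) powr (1-s) = \<epsilon> powr (1-s) * X powr (1-s)"
    using X e by (simp_all add: powr_mult)
  have "1/((1+\<epsilon>)^2*X^2) * (pi*(\<epsilon>*X) powr (1-s)/(1-s)) = pi * \<epsilon> powr (1-s) / ((1+\<epsilon>)^2 * (1-s)) * (X powr (1-s) / X^2)"
    unfolding a by (simp add: field_simps)
  also have "\<dots> = Clo s \<epsilon> * X powr (-1-s)" using powr_X_aux[OF X] by (simp add: Clo_def)
  finally show ?thesis .
qed

lemma K_meas [measurable]: "(\<lambda>y. K s x y) \<in> borel_measurable borel"
  unfolding K_def by measurable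

lemma K_shift: "K s x (x + h) = ennreal ((norm (u_star x - u_star (x+h)))^2 / norm h powr (3 + s))"
  by (simp add: K_def)

lemma div_powr_eq: "h \<noteq> 0 \<Longrightarrow> N / norm h powr (3 + s) = N * norm h powr (-3-s)"
proof -
  have m: "-3-s = -(3+s)" by simp
  have "norm h powr (-3-s) = 1 / norm h powr (3+s)"
    by (simp only: m powr_minus_divide)
  then show "N / norm h powr (3 + s) = N * norm h powr (-3-s)" by simp
qed

lemma F_upper:
  fixes x :: "real^2"
  assumes s: "0 < s" "s < 1" and e: "0 < \<epsilon>" "\<epsilon> \<le> 1/2" and x: "x \<noteq> 0"
  shows "(\<integral>\<^sup>+ y. indicator (ball 0 1) y * K s x y \<partial>lborel) \<le> ennreal (Cup s \<epsilon> * norm x powr (-1-s))"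
proof -
  define X where "X = norm x"
  define c1 where "c1 = 1/((1-\<epsilon>)^2*X^2)"
  have X: "X > 0" using x by (simp add: X_def)
  have c1: "c1 \<ge> 0" by (simp add: c1_def)
  have ue: "norm (u_star x) = 1" using x by simp
  have "(\<integral>\<^sup>+ y. indicator (ball 0 1) y * K s x y \<partial>lborel) \<le> (\<integral>\<^sup>+ y. K s x y \<partial>lborel)"
    by (intro nn_integral_mono) (simp add: indicator_def)
  also have "\<dots> = (\<integral>\<^sup>+ h. K s x (x + h) \<partial>lborel)" by (rule transl2) measurable
  also have "\<dots> \<le> (\<integral>\<^sup>+ h. ennreal c1 * (indicator (ball 0 (\<epsilon>*X)) h * ennreal (((norm h)^2 - (h \<bullet> u_star x)^2) * norm h powr (-3-s)))
                   + ennreal 4 * (indicator {h. \<epsilon>*X \<le> norm h} h * ennreal (norm h powr (-3-s))) \<partial>lborel)"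
  proof (intro nn_integral_mono)
    fix h :: "real^2"
    define N where "N = (norm (u_star x - u_star (x+h)))^2"
    define Q where "Q = (norm h)^2 - (h \<bullet> u_star x)^2"
    define P where "P = norm h powr (-3-s)"
    have P0: "P \<ge> 0" by (simp add: P_def)
    show "K s x (x + h) \<le> ennreal c1 * (indicator (ball 0 (\<epsilon>*X)) h * ennreal (((norm h)^2 - (h \<bullet> u_star x)^2) * norm h powr (-3-s)))
                   + ennreal 4 * (indicator {h. \<epsilon>*X \<le> norm h} h * ennreal (norm h powr (-3-s)))"
    proof (cases "h = 0")
      case True then show ?thesis by (simp add: K_def)
    next
      case h0: False
      have KP: "K s x (x + h) = ennreal (N * P)"
        unfolding K_shift N_def P_def using div_powr_eq[OF h0] by simp
      show ?thesis
      proof (cases "norm h < \<epsilon> * X")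
        case True
        have b: "N * ((1-\<epsilon>)^2 * X^2) \<le> Q"
          using u_star_bounds(2)[OF x e(1) _ , of h] e True by (simp add: N_def Q_def X_def)
        have pos: "(1-\<epsilon>)^2 * X^2 > 0" using e X by simp
        have NQ: "N \<le> c1 * Q" using b pos by (simp add: c1_def field_simps)
        have Q0: "Q \<ge> 0" using b pos by (smt (verit) N_def zero_le_mult_iff zero_le_power2)
        have "ennreal (N * P) \<le> ennreal (c1 * Q * P)"
          using NQ P0 by (intro ennreal_leI mult_right_mono)
        also have "\<dots> = ennreal c1 * ennreal (Q * P)" using c1 Q0 P0 by (simp add: ennreal_mult mult.assoc)
        finally show ?thesis using True unfolding KP Q_def[symmetric] P_def[symmetric]
          by (simp add: indicator_def dist_norm add_increasing2)
      next
        case False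
        have "N \<le> 4" unfolding N_def by (rule u_star_diff_le4)
        then have "ennreal (N * P) \<le> ennreal 4 * ennreal P"
          using P0 by (simp add: ennreal_mult[symmetric] mult_right_mono ennreal_leI del: ennreal_numeral)
        then show ?thesis using False unfolding KP P_def[symmetric]
          by (simp add: indicator_def add_increasing)
      qed
    qed
  qed
  also have "\<dots> = ennreal c1 * (\<integral>\<^sup>+ h. indicator (ball 0 (\<epsilon>*X)) h * ennreal (((norm h)^2 - (h \<bullet> u_star x)^2) * norm h powr (-3-s)) \<partial>lborel)
                + ennreal 4 * (\<integral>\<^sup>+ h. indicator {h. \<epsilon>*X \<le> norm h} h * ennreal (norm (h::real^2) powr (-3-s)) \<partial>lborel)"
  proof -
    have m1: "(\<lambda>h. ennreal c1 * (indicator (ball 0 (\<epsilon>*X)) h * ennreal (((norm h)^2 - (h \<bullet> u_star x)^2) * norm h powr (-3-s)))) \<in> borel_measurable lborel"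
      by measurable
    have m2: "(\<lambda>h. ennreal 4 * (indicator {h. \<epsilon>*X \<le> norm h} h * ennreal (norm (h::real^2) powr (-3-s)))) \<in> borel_measurable lborel"
      by measurable
    show ?thesis
      apply (subst nn_integral_add[OF m1 m2])
      apply (subst nn_integral_cmult, measurable)
      apply (subst nn_integral_cmult, measurable)
      done
  qed
  also have "\<dots> = ennreal c1 * ennreal (pi * (\<epsilon>*X) powr (1-s) / (1-s)) + ennreal 4 * ennreal (2 * pi * (\<epsilon>*X) powr (-1-s) / (1+s))"
    using int_sym[OF s(2) _ ue, of "\<epsilon>*X"] int_large[of s "\<epsilon>*X"] e X s by simp
  also have "\<dots> = ennreal (c1 * (pi * (\<epsilon>*X) powr (1-s) / (1-s)) + 4 * (2 * pi * (\<epsilon>*X) powr (-1-s) / (1+s)))"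
    using c1 s by (simp add: ennreal_mult[symmetric] ennreal_plus[symmetric] del: ennreal_plus ennreal_numeral)
  also have "\<dots> = ennreal (Cup s \<epsilon> * norm x powr (-1-s))"
    using arith_up[OF X e(1), of s] by (simp add: c1_def X_def)
  finally show ?thesis .
qed

lemma F_lower:
  fixes x :: "real^2"
  assumes s: "0 < s" "s < 1" and e: "0 < \<epsilon>" "\<epsilon> \<le> 1/2" and x: "x \<noteq> 0" and xR: "norm x < 1/(1+\<epsilon>)"
  shows "ennreal (Clo s \<epsilon> * norm x powr (-1-s)) \<le> (\<integral>\<^sup>+ y. indicator (ball 0 1) y * K s x y \<partial>lborel)"
proof -
  define X where "X = norm x"
  define c2 where "c2 = 1/((1+\<epsilon>)^2*X^2)"
  have X: "X > 0" using x by (simp add: X_def)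
  have c2: "c2 \<ge> 0" by (simp add: c2_def)
  have ue: "norm (u_star x) = 1" using x by simp
  have XR: "(1+\<epsilon>) * X < 1" using xR e by (simp add: X_def field_simps)
  have "ennreal (Clo s \<epsilon> * norm x powr (-1-s)) = ennreal (c2 * (pi * (\<epsilon>*X) powr (1-s) / (1-s)))"
    using arith_lo[OF X e(1), of s] by (simp add: c2_def X_def)
  also have "\<dots> = ennreal c2 * ennreal (pi * (\<epsilon>*X) powr (1-s) / (1-s))"
    using c2 s by (intro ennreal_mult) auto
  also have "\<dots> = ennreal c2 * (\<integral>\<^sup>+ h. indicator (ball 0 (\<epsilon>*X)) h * ennreal (((norm h)^2 - (h \<bullet> u_star x)^2) * norm h powr (-3-s)) \<partial>lborel)"
    using int_sym[OF s(2) _ ue, of "\<epsilon>*X"] e X by simp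
  also have "\<dots> = (\<integral>\<^sup>+ h. ennreal c2 * (indicator (ball 0 (\<epsilon>*X)) h * ennreal (((norm h)^2 - (h \<bullet> u_star x)^2) * norm h powr (-3-s))) \<partial>lborel)"
    by (rule nn_integral_cmult[symmetric]) measurable
  also have "\<dots> \<le> (\<integral>\<^sup>+ h. indicator (ball 0 1) (x + h) * K s x (x + h) \<partial>lborel)"
  proof (intro nn_integral_mono)
    fix h :: "real^2"
    define N where "N = (norm (u_star x - u_star (x+h)))^2"
    define Q where "Q = (norm h)^2 - (h \<bullet> u_star x)^2"
    define P where "P = norm h powr (-3-s)"
    have P0: "P \<ge> 0" by (simp add: P_def)
    show "ennreal c2 * (indicator (ball 0 (\<epsilon>*X)) h * ennreal (((norm h)^2 - (h \<bullet> u_star x)^2) * norm h powr (-3-s)))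
          \<le> indicator (ball 0 1) (x + h) * K s x (x + h)"
    proof (cases "h \<noteq> 0 \<and> norm h < \<epsilon> * X")
      case False
      then show ?thesis by (auto simp: indicator_def dist_norm)
    next
      case True
      then have h0: "h \<noteq> 0" and hl: "norm h < \<epsilon> * X" by auto
      have KP: "K s x (x + h) = ennreal (N * P)"
        unfolding K_shift N_def P_def using div_powr_eq[OF h0] by simp
      have "norm (x + h) \<le> X + norm h" using norm_triangle_ineq[of x h] by (simp add: X_def)
      then have xh: "x + h \<in> ball 0 1" using hl XR by (simp add: algebra_simps)
      have b: "Q \<le> N * ((1+\<epsilon>)^2 * X^2)"
        using u_star_bounds(1)[OF x e(1) _ , of h] e hl by (simp add: N_def Q_def X_def)
      have pos: "(1+\<epsilon>)^2 * X^2 > 0" using e X by simp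
      have NQ: "c2 * Q \<le> N" using b pos by (simp add: c2_def field_simps)
      have "ennreal c2 * ennreal (Q * P) = ennreal (c2 * Q * P)"
        using c2 by (simp add: ennreal_mult' mult.assoc)
      also have "\<dots> \<le> ennreal (N * P)"
        using NQ P0 by (intro ennreal_leI mult_right_mono)
      finally show ?thesis using True xh unfolding KP Q_def[symmetric] P_def[symmetric]
        by (simp add: indicator_def dist_norm)
    qed
  qed
  also have "\<dots> = (\<integral>\<^sup>+ y. indicator (ball 0 1) y * K s x y \<partial>lborel)"
    by (rule transl2[symmetric]) measurable
  finally show ?thesis .
qed

lemma I_upper:
  assumes s: "0 < s" "s < 1" and e: "0 < \<epsilon>" "\<epsilon> \<le> 1/2"
  shows "gagliardo_sq ((1+s)/2) (ball 0 1) u_star \<le> ennreal (Cup s \<epsilon> * (2 * pi / (1-s)))"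
proof -
  have C0: "Cup s \<epsilon> \<ge> 0" using s e by (simp add: Cup_def)
  have "gagliardo_sq ((1+s)/2) (ball 0 1) u_star =
     (\<integral>\<^sup>+ x. indicator (ball 0 1) x * (\<integral>\<^sup>+ y. indicator (ball 0 1) y * K s x y \<partial>lborel) \<partial>lborel)"
    by (rule gag_fubini)
  also have "\<dots> \<le> (\<integral>\<^sup>+ x. ennreal (Cup s \<epsilon>) * (indicator (ball 0 1) x * ennreal (norm (x::real^2) powr (-1-s))) \<partial>lborel)"
  proof (rule nn_integral_mono_AE)
    show "AE x in lborel. indicator (ball 0 1) x * (\<integral>\<^sup>+ y. indicator (ball 0 1) y * K s x y \<partial>lborel)
          \<le> ennreal (Cup s \<epsilon>) * (indicator (ball 0 1) x * ennreal (norm (x::real^2) powr (-1-s)))"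
      using AE_lborel_singleton[of "0::real^2"]
    proof eventually_elim
      fix x :: "real^2" assume x: "x \<noteq> 0"
      show "indicator (ball 0 1) x * (\<integral>\<^sup>+ y. indicator (ball 0 1) y * K s x y \<partial>lborel)
          \<le> ennreal (Cup s \<epsilon>) * (indicator (ball 0 1) x * ennreal (norm (x::real^2) powr (-1-s)))"
      proof (cases "x \<in> ball 0 1")
        case True
        have "ennreal (Cup s \<epsilon> * norm x powr (-1-s)) = ennreal (Cup s \<epsilon>) * ennreal (norm x powr (-1-s))"
          using C0 by (intro ennreal_mult) auto
        then show ?thesis using True F_upper[OF s e x] by simp
      qed simp
    qed
  qed
  also have "\<dots> = ennreal (Cup s \<epsilon>) * (\<integral>\<^sup>+ x. indicator (ball 0 1) x * ennreal (norm (x::real^2) powr (-1-s)) \<partial>lborel)"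
    by (rule nn_integral_cmult) measurable
  also have "\<dots> = ennreal (Cup s \<epsilon>) * ennreal (2 * pi * 1 powr (1-s) / (1-s))"
    using int_small[of s 1] s by simp
  also have "\<dots> = ennreal (Cup s \<epsilon>) * ennreal (2 * pi / (1-s))" by simp
  also have "\<dots> = ennreal (Cup s \<epsilon> * (2 * pi / (1-s)))"
    using C0 s by (intro ennreal_mult[symmetric]) auto
  finally show ?thesis .
qed

lemma I_lower:
  assumes s: "0 < s" "s < 1" and e: "0 < \<epsilon>" "\<epsilon> \<le> 1/2"
  shows "ennreal (Clo s \<epsilon> * (2 * pi * (1/(1+\<epsilon>)) powr (1-s) / (1-s))) \<le> gagliardo_sq ((1+s)/2) (ball 0 1) u_star"
proof -
  define R where "R = 1/(1+\<epsilon>)"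
  have R: "0 < R" "R \<le> 1" using e by (auto simp: R_def)
  have C0: "Clo s \<epsilon> \<ge> 0" using s e by (simp add: Clo_def)
  have "ennreal (Clo s \<epsilon> * (2 * pi * R powr (1-s) / (1-s))) = ennreal (Clo s \<epsilon>) * ennreal (2 * pi * R powr (1-s) / (1-s))"
    using C0 s by (intro ennreal_mult) auto
  also have "\<dots> = ennreal (Clo s \<epsilon>) * (\<integral>\<^sup>+ x. indicator (ball 0 R) x * ennreal (norm (x::real^2) powr (-1-s)) \<partial>lborel)"
    using int_small[of s R] s R by simp
  also have "\<dots> = (\<integral>\<^sup>+ x. ennreal (Clo s \<epsilon>) * (indicator (ball 0 R) x * ennreal (norm (x::real^2) powr (-1-s))) \<partial>lborel)"
    by (rule nn_integral_cmult[symmetric]) measurable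
  also have "\<dots> \<le> (\<integral>\<^sup>+ x. indicator (ball 0 1) x * (\<integral>\<^sup>+ y. indicator (ball 0 1) y * K s x y \<partial>lborel) \<partial>lborel)"
  proof (rule nn_integral_mono_AE)
    show "AE x in lborel. ennreal (Clo s \<epsilon>) * (indicator (ball 0 R) x * ennreal (norm (x::real^2) powr (-1-s)))
       \<le> indicator (ball 0 1) x * (\<integral>\<^sup>+ y. indicator (ball 0 1) y * K s x y \<partial>lborel)"
      using AE_lborel_singleton[of "0::real^2"]
    proof eventually_elim
      fix x :: "real^2" assume x: "x \<noteq> 0"
      show "ennreal (Clo s \<epsilon>) * (indicator (ball 0 R) x * ennreal (norm (x::real^2) powr (-1-s)))
       \<le> indicator (ball 0 1) x * (\<integral>\<^sup>+ y. indicator (ball 0 1) y * K s x y \<partial>lborel)"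
      proof (cases "x \<in> ball 0 R")
        case True
        then have x1: "x \<in> ball 0 1" using R by auto
        have xR: "norm x < 1/(1+\<epsilon>)" using True by (simp add: R_def)
        have "ennreal (Clo s \<epsilon> * norm x powr (-1-s)) = ennreal (Clo s \<epsilon>) * ennreal (norm x powr (-1-s))"
          using C0 by (intro ennreal_mult) auto
        then show ?thesis using True x1 F_lower[OF s e x xR] by simp
      qed simp
    qed
  qed
  also have "\<dots> = gagliardo_sq ((1+s)/2) (ball 0 1) u_star"
    by (rule gag_fubini[symmetric])
  finally show ?thesis unfolding R_def .
qed

lemma aux1: "(t::real) \<noteq> 0 \<Longrightarrow> t^2 * (C * (A / t)) = A * (t * C)"
  by (simp add: power2_eq_square)

lemma aux2: "(t::real) \<noteq> 0 \<Longrightarrow> t * (a / (d * t) + b) = a / d + t * b"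
  by (simp add: distrib_left)

lemma lim_up:
  assumes e: "0 < \<epsilon>" "\<epsilon> < 1"
  shows "((\<lambda>s. (1-s)^2 * (Cup s \<epsilon> * (2 * pi / (1-s)))) \<longlongrightarrow> 2 * pi^2 / (1-\<epsilon>)^2) (at_left 1)"
proof -
  define V where "V s = 2*pi*(pi*\<epsilon> powr (1-s)/(1-\<epsilon>)^2 + (1-s)*(8*pi*\<epsilon> powr (-1-s)/(1+s)))" for s
  have ev: "\<forall>\<^sub>F s in at_left 1. V s = (1-s)^2 * (Cup s \<epsilon> * (2 * pi / (1-s)))"
    using eventually_at_left_real[of 0 "1::real", OF zero_less_one]
  proof eventually_elim
    fix s :: real assume "s \<in> {0<..<1}"
    then have s: "0 < s" "s < 1" by auto
    have t: "1 - s \<noteq> 0" using s by auto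
    show "V s = (1-s)^2 * (Cup s \<epsilon> * (2 * pi / (1-s)))"
      unfolding aux1[OF t] Cup_def aux2[OF t] V_def by simp
  qed
  have "(V \<longlongrightarrow> V 1) (at_left 1)"
    unfolding V_def using e by (intro tendsto_intros) auto
  moreover have "V 1 = 2 * pi^2 / (1-\<epsilon>)^2" using e by (simp add: V_def power2_eq_square)
  ultimately have "(V \<longlongrightarrow> 2 * pi^2 / (1-\<epsilon>)^2) (at_left 1)" by simp
  then show ?thesis using tendsto_cong[OF ev] by simp
qed

lemma lim_lo:
  assumes e: "0 < \<epsilon>" "\<epsilon> < 1"
  shows "((\<lambda>s. (1-s)^2 * (Clo s \<epsilon> * (2 * pi * (1/(1+\<epsilon>)) powr (1-s) / (1-s)))) \<longlongrightarrow> 2 * pi^2 / (1+\<epsilon>)^2) (at_left 1)"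
proof -
  define V where "V s = 2 * pi * (1/(1+\<epsilon>)) powr (1-s) * (pi*\<epsilon> powr (1-s)/(1+\<epsilon>)^2 + (1-s) * 0)" for s
  have ev: "\<forall>\<^sub>F s in at_left 1. V s = (1-s)^2 * (Clo s \<epsilon> * (2 * pi * (1/(1+\<epsilon>)) powr (1-s) / (1-s)))"
    using eventually_at_left_real[of 0 "1::real", OF zero_less_one]
  proof eventually_elim
    fix s :: real assume "s \<in> {0<..<1}"
    then have s: "0 < s" "s < 1" by auto
    have t: "1 - s \<noteq> 0" using s by auto
    have "(1-s) * Clo s \<epsilon> = (1-s) * (pi*\<epsilon> powr (1-s)/((1+\<epsilon>)^2 * (1-s)) + 0)" by (simp add: Clo_def)
    also have "\<dots> = pi*\<epsilon> powr (1-s)/(1+\<epsilon>)^2 + (1-s) * 0" by (rule aux2[OF t])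
    finally have "(1-s) * Clo s \<epsilon> = pi*\<epsilon> powr (1-s)/(1+\<epsilon>)^2 + (1-s) * 0" .
    then show "V s = (1-s)^2 * (Clo s \<epsilon> * (2 * pi * (1/(1+\<epsilon>)) powr (1-s) / (1-s)))"
      unfolding aux1[OF t] V_def by simp
  qed
  have "(V \<longlongrightarrow> V 1) (at_left 1)"
    unfolding V_def using e by (intro tendsto_intros) auto
  moreover have "V 1 = 2 * pi^2 / (1+\<epsilon>)^2" using e by (simp add: V_def power2_eq_square)
  ultimately have "(V \<longlongrightarrow> 2 * pi^2 / (1+\<epsilon>)^2) (at_left 1)" by simp
  then show ?thesis using tendsto_cong[OF ev] by simp
qed

lemma exists_eps:
  fixes g :: "real \<Rightarrow> real" and P :: "real \<Rightarrow> bool"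
  assumes "(g \<longlongrightarrow> 2 * pi^2) (at_right 0)"
  assumes "\<forall>\<^sub>F \<epsilon> in at_right 0. P \<epsilon>"
  shows "\<exists>\<epsilon>. 0 < \<epsilon> \<and> \<epsilon> < 1/2 \<and> P \<epsilon>"
proof -
  have "\<forall>\<^sub>F \<epsilon> in at_right (0::real). \<epsilon> \<in> {0<..<1/2}" by (rule eventually_at_right_real) simp
  then have "\<forall>\<^sub>F \<epsilon> in at_right (0::real). \<epsilon> \<in> {0<..<1/2} \<and> P \<epsilon>" using assms(2) by eventually_elim auto
  from eventually_happens[OF this] show ?thesis by auto
qed

theorem lemmaA1:
  shows "((\<lambda>s::real. ennreal ((1 - s)\<^sup>2) * gagliardo_sq ((1 + s) / 2) (ball 0 1) u_star)
           \<longlongrightarrow> ennreal (2 * pi\<^sup>2)) (at_left 1)"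
proof (rule order_tendstoI)
  have ev01: "\<forall>\<^sub>F s in at_left 1. s \<in> {0<..<1::real}"
    using eventually_at_left_real[of 0 "1::real", OF zero_less_one] .
  fix a assume a: "a < ennreal (2 * pi\<^sup>2)"
  have "((\<lambda>\<epsilon>. ennreal (2 * pi^2 / (1+\<epsilon>)^2)) \<longlongrightarrow> ennreal (2 * pi^2 / (1+0)^2)) (at_right 0)"
    by (intro tendsto_ennrealI tendsto_intros) auto
  then have "\<forall>\<^sub>F \<epsilon> in at_right 0. a < ennreal (2 * pi^2 / (1+\<epsilon>)^2)"
    using a by (intro order_tendstoD(1)) auto
  then obtain \<epsilon> where e: "0 < \<epsilon>" "\<epsilon> < 1/2" and ae: "a < ennreal (2 * pi^2 / (1+\<epsilon>)^2)"
    using exists_eps[of "\<lambda>_. 2 * pi^2"] by auto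
  have "((\<lambda>s. ennreal ((1-s)^2 * (Clo s \<epsilon> * (2 * pi * (1/(1+\<epsilon>)) powr (1-s) / (1-s))))) \<longlongrightarrow> ennreal (2 * pi^2 / (1+\<epsilon>)^2)) (at_left 1)"
    using e by (intro tendsto_ennrealI lim_lo) auto
  then have "\<forall>\<^sub>F s in at_left 1. a < ennreal ((1-s)^2 * (Clo s \<epsilon> * (2 * pi * (1/(1+\<epsilon>)) powr (1-s) / (1-s))))"
    using ae by (rule order_tendstoD(1))
  then show "\<forall>\<^sub>F s in at_left 1. a < ennreal ((1 - s)\<^sup>2) * gagliardo_sq ((1 + s) / 2) (ball 0 1) u_star"
    using ev01
  proof eventually_elim
    case (elim s)
    then have s: "0 < s" "s < 1" by auto
    have C0: "Clo s \<epsilon> \<ge> 0" using s e by (simp add: Clo_def)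
    have "ennreal ((1-s)^2 * (Clo s \<epsilon> * (2 * pi * (1/(1+\<epsilon>)) powr (1-s) / (1-s))))
        = ennreal ((1-s)^2) * ennreal (Clo s \<epsilon> * (2 * pi * (1/(1+\<epsilon>)) powr (1-s) / (1-s)))"
      using C0 s by (intro ennreal_mult) auto
    also have "\<dots> \<le> ennreal ((1 - s)\<^sup>2) * gagliardo_sq ((1 + s) / 2) (ball 0 1) u_star"
      using I_lower[OF s e(1)] e by (intro mult_left_mono) auto
    finally show ?case using elim by simp
  qed
next
  have ev01: "\<forall>\<^sub>F s in at_left 1. s \<in> {0<..<1::real}"
    using eventually_at_left_real[of 0 "1::real", OF zero_less_one] .
  fix a assume a: "a > ennreal (2 * pi\<^sup>2)"
  have "((\<lambda>\<epsilon>. ennreal (2 * pi^2 / (1-\<epsilon>)^2)) \<longlongrightarrow> ennreal (2 * pi^2 / (1-0)^2)) (at_right 0)"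
    by (intro tendsto_ennrealI tendsto_intros) auto
  then have "\<forall>\<^sub>F \<epsilon> in at_right 0. ennreal (2 * pi^2 / (1-\<epsilon>)^2) < a"
    using a by (intro order_tendstoD(2)) auto
  then obtain \<epsilon> where e: "0 < \<epsilon>" "\<epsilon> < 1/2" and ae: "ennreal (2 * pi^2 / (1-\<epsilon>)^2) < a"
    using exists_eps[of "\<lambda>_. 2 * pi^2"] by auto
  have "((\<lambda>s. ennreal ((1-s)^2 * (Cup s \<epsilon> * (2 * pi / (1-s))))) \<longlongrightarrow> ennreal (2 * pi^2 / (1-\<epsilon>)^2)) (at_left 1)"
    using e by (intro tendsto_ennrealI lim_up) auto
  then have "\<forall>\<^sub>F s in at_left 1. ennreal ((1-s)^2 * (Cup s \<epsilon> * (2 * pi / (1-s)))) < a"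
    using ae by (rule order_tendstoD(2))
  then show "\<forall>\<^sub>F s in at_left 1. ennreal ((1 - s)\<^sup>2) * gagliardo_sq ((1 + s) / 2) (ball 0 1) u_star < a"
    using ev01
  proof eventually_elim
    case (elim s)
    then have s: "0 < s" "s < 1" by auto
    have C0: "Cup s \<epsilon> \<ge> 0" using s e by (simp add: Cup_def)
    have "ennreal ((1 - s)\<^sup>2) * gagliardo_sq ((1 + s) / 2) (ball 0 1) u_star
        \<le> ennreal ((1-s)^2) * ennreal (Cup s \<epsilon> * (2 * pi / (1-s)))"
      using I_upper[OF s e(1)] e by (intro mult_left_mono) auto
    also have "\<dots> = ennreal ((1-s)^2 * (Cup s \<epsilon> * (2 * pi / (1-s))))"
      using C0 s by (intro ennreal_mult[symmetric]) auto
    finally show ?case using elim by simp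
  qed
qed


end
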